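(* Let $N$ be an odd positive integer and let $|\psi\rangle$ be any pure state of $N$ qubits, with density matrix $\rho=|\psi\rangle\langle\psi|$. Then its length of correlations satisfies $$\mathcal{C}(\psi)=\sum_{j_1,\dots,j_N=1}^{3} T_{j_1\dots j_N}^2\;\le\; 2^{N-1}.$$
   Context: Let $\sigma_0=\mathbb{I}$ and let $\sigma_1,\sigma_2,\sigma_3$ be the Pauli matrices. Any $N$-qubit density matrix can be written as $\rho=2^{-N}\sum_{\mu_1,\dots,\mu_N=0}^{3}T_{\mu_1\dots\mu_N}\,\sigma_{\mu_1}\otimes\dots\otimes\sigma_{\mu_N}$ with real coefficients $T_{\mu_1\dots\mu_N}=\mathrm{Tr}(\rho\,\sigma_{\mu_1}\otimes\dots\otimes\sigma_{\mu_N})$. The length of correlations of $\rho$ is $\mathcal{C}(\rho)=\sum_{j_1,\dots,j_N=1}^{3}T_{j_1\dots j_N}^2$ (all indices ranging over $1,2,3$ only, i.e. only full $N$-partite correlations). *)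

theory Defs
  imports Complex_Main
begin

text \<open>Computational basis of N qubits: bit strings of length N (False = |0>, True = |1>).\<close>
definition qbasis :: "nat \<Rightarrow> bool list set" where
  "qbasis N = {xs. length xs = N}"

text \<open>Pauli matrices sigma_0 = I, sigma_1, sigma_2, sigma_3, entries indexed by (row, column).\<close>
definition pauli :: "nat \<Rightarrow> bool \<Rightarrow> bool \<Rightarrow> complex" where
  "pauli \<mu> r c =
     (if \<mu> = 0 then (if r = c then 1 else 0)
      else if \<mu> = 1 then (if r \<noteq> c then 1 else 0)
      else if \<mu> = 2 then (if r = c then 0 else if r then \<i> else - \<i>)
      else if \<mu> = 3 then (if r \<noteq> c then 0 else if r then -1 else 1)
      else 0)"

definition pauli_tensor :: "nat list \<Rightarrow> bool list \<Rightarrow> bool list \<Rightarrow> complex" where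
  "pauli_tensor \<mu>s r c = (\<Prod>k<length \<mu>s. pauli (\<mu>s ! k) (r ! k) (c ! k))"

definition is_pure_state :: "nat \<Rightarrow> (bool list \<Rightarrow> complex) \<Rightarrow> bool" where
  "is_pure_state N \<psi> \<longleftrightarrow> (\<Sum>r\<in>qbasis N. (cmod (\<psi> r))\<^sup>2) = 1"

definition density :: "(bool list \<Rightarrow> complex) \<Rightarrow> bool list \<Rightarrow> bool list \<Rightarrow> complex" where
  "density \<psi> r c = \<psi> r * cnj (\<psi> c)"

text \<open>Correlation coefficient T_{mu_1..mu_N} = Tr(rho sigma_{mu_1} \<otimes> ... \<otimes> sigma_{mu_N})
  (a real number; we take the real part, the imaginary part being zero).\<close>
definition corr_T :: "nat \<Rightarrow> (bool list \<Rightarrow> complex) \<Rightarrow> nat list \<Rightarrow> real" where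
  "corr_T N \<psi> \<mu>s =
     Re (\<Sum>r\<in>qbasis N. \<Sum>c\<in>qbasis N. density \<psi> r c * pauli_tensor \<mu>s c r)"

definition length_of_correlations :: "nat \<Rightarrow> (bool list \<Rightarrow> complex) \<Rightarrow> real" where
  "length_of_correlations N \<psi> =
     (\<Sum>js\<in>{js. length js = N \<and> set js \<subseteq> {1,2,3}}. (corr_T N \<psi> js)\<^sup>2)"

end

theory Submission
  imports Defs
begin

definition sg :: "nat \<Rightarrow> complex" where "sg m = (if m = 0 then 1 else -1)"
definition eps :: "bool \<Rightarrow> bool \<Rightarrow> complex" where "eps a b = (if a = b then 0 else if a then -1 else 1)"
lemma bitA: "(\<Sum>m\<in>{0,1,2,3::nat}. pauli m a b * pauli m c d) = 2 * of_bool (a = d) * of_bool (b = c)"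
  by (cases a; cases b; cases c; cases d) (simp_all add: pauli_def)
lemma bitB: "(\<Sum>m\<in>{0,1,2,3::nat}. sg m * pauli m a b * pauli m c d) = 2 * eps a c * eps b d"
  by (cases a; cases b; cases c; cases d) (simp_all add: pauli_def sg_def eps_def)
lemma cnj_pauli: "cnj (pauli m a b) = pauli m b a"
  by (cases a; cases b) (auto simp: pauli_def)

definition LL :: "'a set \<Rightarrow> nat \<Rightarrow> 'a list set" where
  "LL A N = {xs. length xs = N \<and> set xs \<subseteq> A}"

lemma LL_Suc: "LL A (Suc N) = (\<lambda>(m,xs). m#xs) ` (A \<times> LL A N)"
  by (auto simp: LL_def length_Suc_conv image_iff)

lemma LL_0: "LL A 0 = {[]}" by (auto simp: LL_def)

lemma finite_LL: "finite A \<Longrightarrow> finite (LL A N)"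
  using finite_lists_length_eq[of A N] by (simp add: LL_def conj_commute)

lemma sum_prod_LL:
  fixes f :: "nat \<Rightarrow> 'a \<Rightarrow> 'b::comm_semiring_1"
  assumes "finite A"
  shows "(\<Sum>xs\<in>LL A N. \<Prod>k<N. f k (xs!k)) = (\<Prod>k<N. \<Sum>m\<in>A. f k m)"
proof (induction N arbitrary: f)
  case 0 then show ?case by (simp add: LL_0)
next
  case (Suc N)
  have inj: "inj_on (\<lambda>(m,xs). m#xs) (A \<times> LL A N)" by (auto simp: inj_on_def)
  have "(\<Sum>xs\<in>LL A (Suc N). \<Prod>k<Suc N. f k (xs!k))
      = (\<Sum>(m,xs)\<in>A \<times> LL A N. \<Prod>k<Suc N. f k ((m#xs)!k))"
    unfolding LL_Suc by (subst sum.reindex[OF inj]) (simp add: case_prod_beta)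
  also have "\<dots> = (\<Sum>m\<in>A. \<Sum>xs\<in>LL A N. f 0 m * (\<Prod>k<N. f (Suc k) (xs!k)))"
    by (subst sum.cartesian_product[symmetric]) (simp only: prod.lessThan_Suc_shift nth_Cons_0 nth_Cons_Suc)
  also have "\<dots> = (\<Sum>m\<in>A. f 0 m * (\<Prod>k<N. \<Sum>m\<in>A. f (Suc k) m))"
    by (simp add: sum_distrib_left[symmetric] Suc.IH[of "\<lambda>k. f (Suc k)"])
  also have "\<dots> = (\<Prod>k<Suc N. \<Sum>m\<in>A. f k m)"
    by (simp only: prod.lessThan_Suc_shift sum_distrib_right)
  finally show ?case .
qed

lemma qbasis_LL: "qbasis N = LL UNIV N" by (simp add: qbasis_def LL_def)
lemma finite_qbasis: "finite (qbasis N)" by (simp add: qbasis_LL finite_LL)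

lemma prod_of_bool_eq:
  assumes "length x = N" "length y = N"
  shows "(\<Prod>k<N. (of_bool (x!k = y!k) :: 'a::comm_semiring_1)) = of_bool (x = y)"
proof -
  have "(\<Prod>k<N. (of_bool (x!k = y!k) :: 'a)) = of_bool (\<forall>k<N. x!k = y!k)"
    by (induction N) (auto simp: less_Suc_eq)
  thus ?thesis using assms by (simp add: list_eq_iff_nth_eq)
qed


definition ws :: "nat \<Rightarrow> nat list \<Rightarrow> complex" where "ws N \<mu> = (\<Prod>k<N. sg (\<mu>!k))"
definition EE :: "nat \<Rightarrow> bool list \<Rightarrow> bool list \<Rightarrow> complex" where
  "EE N x y = (\<Prod>k<N. eps (x!k) (y!k))"

lemma kerA:
  assumes "length c = N" "length r = N" "length c' = N" "length r' = N"
  shows "(\<Sum>\<mu>\<in>LL {0,1,2,3} N. pauli_tensor \<mu> c r * pauli_tensor \<mu> c' r')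
     = 2^N * of_bool (c = r') * of_bool (r = c')"
proof -
  have "(\<Sum>\<mu>\<in>LL {0,1,2,3} N. pauli_tensor \<mu> c r * pauli_tensor \<mu> c' r')
     = (\<Sum>\<mu>\<in>LL {0,1,2,3} N. \<Prod>k<N. pauli (\<mu>!k) (c!k) (r!k) * pauli (\<mu>!k) (c'!k) (r'!k))"
    by (rule sum.cong) (auto simp: LL_def pauli_tensor_def prod.distrib)
  also have "\<dots> = (\<Prod>k<N. 2 * of_bool (c!k = r'!k) * of_bool (r!k = c'!k))"
    by (subst sum_prod_LL, simp, simp only: bitA)
  also have "\<dots> = 2^N * of_bool (c = r') * of_bool (r = c')"
    using assms by (simp add: prod.distrib prod_of_bool_eq)
  finally show ?thesis .
qed

lemma kerB:
  assumes "length c = N" "length r = N" "length c' = N" "length r' = N"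
  shows "(\<Sum>\<mu>\<in>LL {0,1,2,3} N. ws N \<mu> * pauli_tensor \<mu> c r * pauli_tensor \<mu> c' r')
     = 2^N * EE N c c' * EE N r r'"
proof -
  have "(\<Sum>\<mu>\<in>LL {0,1,2,3} N. ws N \<mu> * pauli_tensor \<mu> c r * pauli_tensor \<mu> c' r')
     = (\<Sum>\<mu>\<in>LL {0,1,2,3} N. \<Prod>k<N. sg (\<mu>!k) * pauli (\<mu>!k) (c!k) (r!k) * pauli (\<mu>!k) (c'!k) (r'!k))"
    by (rule sum.cong) (auto simp: LL_def pauli_tensor_def prod.distrib ws_def)
  also have "\<dots> = (\<Prod>k<N. 2 * eps (c!k) (c'!k) * eps (r!k) (r'!k))"
    by (subst sum_prod_LL, simp, simp only: bitB)
  also have "\<dots> = 2^N * EE N c c' * EE N r r'"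
    by (simp add: prod.distrib EE_def)
  finally show ?thesis .
qed

lemma EE_antisym: "odd N \<Longrightarrow> EE N y x = - EE N x y"
proof -
  assume "odd N"
  have "EE N y x = (\<Prod>k<N. (-1) * eps (x!k) (y!k))"
    unfolding EE_def by (rule prod.cong) (auto simp: eps_def)
  also have "\<dots> = (-1)^N * EE N x y" unfolding EE_def by (simp only: prod.distrib prod_constant card_lessThan)
  finally show ?thesis using \<open>odd N\<close> by simp
qed

lemma Q_zero:
  fixes f :: "'a \<Rightarrow> 'a \<Rightarrow> complex"
  assumes "finite B" "\<And>x y. f y x = - f x y"
  shows "(\<Sum>x\<in>B. \<Sum>y\<in>B. f x y) = 0"
proof -
  have "(\<Sum>x\<in>B. \<Sum>y\<in>B. f x y) = (\<Sum>y\<in>B. \<Sum>x\<in>B. f x y)" by (rule sum.swap)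
  also have "\<dots> = (\<Sum>y\<in>B. \<Sum>x\<in>B. - f y x)" by (rule sum.cong[OF refl], rule sum.cong[OF refl], rule assms(2))
  also have "\<dots> = - (\<Sum>y\<in>B. \<Sum>x\<in>B. f y x)" by (simp only: sum_negf)
  finally show ?thesis by simp
qed

lemma swap_in:
  fixes h :: "'m \<Rightarrow> 'a \<Rightarrow> 'a \<Rightarrow> 'a \<Rightarrow> 'a \<Rightarrow> complex"
  shows "(\<Sum>\<mu>\<in>M. (\<Sum>r\<in>B. \<Sum>r'\<in>B. \<Sum>c\<in>B. \<Sum>c'\<in>B. h \<mu> r r' c c'))
   = (\<Sum>r\<in>B. \<Sum>r'\<in>B. \<Sum>c\<in>B. \<Sum>c'\<in>B. \<Sum>\<mu>\<in>M. h \<mu> r r' c c')"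
proof -
  have "(\<Sum>\<mu>\<in>M. (\<Sum>r\<in>B. \<Sum>r'\<in>B. \<Sum>c\<in>B. \<Sum>c'\<in>B. h \<mu> r r' c c'))
    = (\<Sum>r\<in>B. \<Sum>\<mu>\<in>M. \<Sum>r'\<in>B. \<Sum>c\<in>B. \<Sum>c'\<in>B. h \<mu> r r' c c')" by (rule sum.swap)
  also have "\<dots> = (\<Sum>r\<in>B. \<Sum>r'\<in>B. \<Sum>\<mu>\<in>M. \<Sum>c\<in>B. \<Sum>c'\<in>B. h \<mu> r r' c c')"
    by (rule sum.cong[OF refl], rule sum.swap)
  also have "\<dots> = (\<Sum>r\<in>B. \<Sum>r'\<in>B. \<Sum>c\<in>B. \<Sum>\<mu>\<in>M. \<Sum>c'\<in>B. h \<mu> r r' c c')"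
    by (rule sum.cong[OF refl], rule sum.cong[OF refl], rule sum.swap)
  also have "\<dots> = (\<Sum>r\<in>B. \<Sum>r'\<in>B. \<Sum>c\<in>B. \<Sum>c'\<in>B. \<Sum>\<mu>\<in>M. h \<mu> r r' c c')"
    by (rule sum.cong[OF refl], rule sum.cong[OF refl], rule sum.cong[OF refl], rule sum.swap)
  finally show ?thesis .
qed

lemma sq_expand:
  fixes a :: "'a \<Rightarrow> 'a \<Rightarrow> complex"
  shows "(\<Sum>r\<in>B. \<Sum>c\<in>B. a r c)^2 = (\<Sum>r\<in>B. \<Sum>r'\<in>B. \<Sum>c\<in>B. \<Sum>c'\<in>B. a r c * a r' c')"
  by (simp only: power2_eq_square sum_product)


lemma cnj_PT: "cnj (pauli_tensor \<mu> c r) = pauli_tensor \<mu> r c"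
  by (simp add: pauli_tensor_def cnj_pauli)

lemma cnj_density: "cnj (density \<psi> r c) = density \<psi> c r"
  by (simp add: density_def mult.commute)

lemma sum_of_bool_delta:
  fixes X :: "'a \<Rightarrow> complex"
  assumes "finite B" "r \<in> B"
  shows "(\<Sum>x\<in>B. of_bool (r = x) * X x) = X r"
proof -
  have "(\<Sum>x\<in>B. of_bool (r = x) * X x) = (\<Sum>x\<in>B. if r = x then X x else 0)"
    by (rule sum.cong[OF refl]) simp
  also have "\<dots> = X r" using assms by (simp only: sum.delta' if_True)
  finally show ?thesis .
qed

lemma tc_real:
  fixes N :: nat and \<psi> :: "bool list \<Rightarrow> complex"
  defines "tc \<equiv> \<lambda>\<mu>. (\<Sum>r\<in>qbasis N. \<Sum>c\<in>qbasis N. density \<psi> r c * pauli_tensor \<mu> c r)"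
  shows "tc \<mu> = complex_of_real (corr_T N \<psi> \<mu>)"
proof -
  have "cnj (tc \<mu>) = (\<Sum>r\<in>qbasis N. \<Sum>c\<in>qbasis N. density \<psi> c r * pauli_tensor \<mu> r c)"
    unfolding tc_def by (simp only: cnj_sum complex_cnj_mult cnj_density cnj_PT)
  also have "\<dots> = tc \<mu>" unfolding tc_def by (rule sum.swap)
  finally have "cnj (tc \<mu>) = tc \<mu>" .
  hence "Im (cnj (tc \<mu>)) = Im (tc \<mu>)" by (rule arg_cong)
  hence "Im (tc \<mu>) = 0" by simp
  hence e: "tc \<mu> = complex_of_real (Re (tc \<mu>))" by (simp add: complex_eq_iff)
  have "Re (tc \<mu>) = corr_T N \<psi> \<mu>" by (simp add: corr_T_def tc_def)
  with e show ?thesis by simp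
qed


theorem theorem3:
  fixes N :: nat and \<psi> :: "bool list \<Rightarrow> complex"
  assumes "odd N"
    and "is_pure_state N \<psi>"
  shows "length_of_correlations N \<psi> \<le> 2 ^ (N - 1)"
proof -
  define B where "B = qbasis N"
  define M where "M = LL {0,1,2,3::nat} N"
  define F where "F = LL {1,2,3::nat} N"
  define tc where "tc = (\<lambda>\<mu>. (\<Sum>r\<in>B. \<Sum>c\<in>B. density \<psi> r c * pauli_tensor \<mu> c r))"
  define T where "T = corr_T N \<psi>"
  have finB: "finite B" by (simp add: B_def finite_qbasis)
  have finM: "finite M" by (simp add: M_def finite_LL)
  have lenB: "\<And>x. x \<in> B \<Longrightarrow> length x = N" by (simp add: B_def qbasis_def)
  have tcT: "\<And>\<mu>. tc \<mu> = complex_of_real (T \<mu>)"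
    unfolding tc_def T_def B_def by (rule tc_real)
  have expand: "\<And>w. (\<Sum>\<mu>\<in>M. w \<mu> * tc \<mu> ^ 2) = (\<Sum>r\<in>B. \<Sum>r'\<in>B. \<Sum>c\<in>B. \<Sum>c'\<in>B.
      density \<psi> r c * density \<psi> r' c' * (\<Sum>\<mu>\<in>M. w \<mu> * pauli_tensor \<mu> c r * pauli_tensor \<mu> c' r'))"
  proof -
    fix w :: "nat list \<Rightarrow> complex"
    have "(\<Sum>\<mu>\<in>M. w \<mu> * tc \<mu> ^ 2) = (\<Sum>\<mu>\<in>M. (\<Sum>r\<in>B. \<Sum>r'\<in>B. \<Sum>c\<in>B. \<Sum>c'\<in>B.
       w \<mu> * ((density \<psi> r c * pauli_tensor \<mu> c r) * (density \<psi> r' c' * pauli_tensor \<mu> c' r'))))"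
      unfolding tc_def sq_expand by (simp add: sum_distrib_left)
    also have "\<dots> = (\<Sum>r\<in>B. \<Sum>r'\<in>B. \<Sum>c\<in>B. \<Sum>c'\<in>B. \<Sum>\<mu>\<in>M.
       w \<mu> * ((density \<psi> r c * pauli_tensor \<mu> c r) * (density \<psi> r' c' * pauli_tensor \<mu> c' r')))"
      by (rule swap_in)
    also have "\<dots> = (\<Sum>r\<in>B. \<Sum>r'\<in>B. \<Sum>c\<in>B. \<Sum>c'\<in>B.
      density \<psi> r c * density \<psi> r' c' * (\<Sum>\<mu>\<in>M. w \<mu> * pauli_tensor \<mu> c r * pauli_tensor \<mu> c' r'))"
      by (simp add: sum_distrib_left mult_ac)
    finally show "?thesis w" .
  qed
  have normsq: "(\<Sum>r\<in>B. complex_of_real ((cmod (\<psi> r))\<^sup>2)) = 1"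
    using assms(2) unfolding is_pure_state_def B_def
    by (metis of_real_1 of_real_sum)
  have normsq': "(\<Sum>r\<in>B. \<psi> r * cnj (\<psi> r)) = 1"
    using normsq by (simp only: complex_norm_square)
  have SA: "(\<Sum>\<mu>\<in>M. tc \<mu> ^ 2) = 2 ^ N"
  proof -
    have "(\<Sum>\<mu>\<in>M. tc \<mu> ^ 2) = (\<Sum>\<mu>\<in>M. (\<lambda>_. 1) \<mu> * tc \<mu> ^ 2)" by simp
    also have "\<dots> = (\<Sum>r\<in>B. \<Sum>r'\<in>B. \<Sum>c\<in>B. \<Sum>c'\<in>B.
      density \<psi> r c * density \<psi> r' c' * (2^N * of_bool (c = r') * of_bool (r = c')))"
      unfolding expand using kerA lenB unfolding M_def by simp
    also have "\<dots> = (\<Sum>r\<in>B. \<Sum>r'\<in>B. \<Sum>c\<in>B. of_bool (r' = c) *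
      (2^N * density \<psi> r c * density \<psi> r' r))"
    proof (intro sum.cong refl)
      fix r r' c assume rB: "r \<in> B"
      have "(\<Sum>c'\<in>B. density \<psi> r c * density \<psi> r' c' * (2^N * of_bool (c = r') * of_bool (r = c')))
        = (\<Sum>c'\<in>B. of_bool (r = c') * (of_bool (r' = c) * (2^N * density \<psi> r c * density \<psi> r' c')))"
        by (rule sum.cong[OF refl]) auto
      also have "\<dots> = of_bool (r' = c) * (2^N * density \<psi> r c * density \<psi> r' r)"
        by (rule sum_of_bool_delta[OF finB rB])
      finally show "(\<Sum>c'\<in>B. density \<psi> r c * density \<psi> r' c' * (2^N * of_bool (c = r') * of_bool (r = c')))
        = of_bool (r' = c) * (2^N * density \<psi> r c * density \<psi> r' r)" .
    qed
    also have "\<dots> = (\<Sum>r\<in>B. \<Sum>r'\<in>B. 2^N * density \<psi> r r' * density \<psi> r' r)"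
      by (intro sum.cong refl, rule sum_of_bool_delta[OF finB])
    also have "\<dots> = (\<Sum>r\<in>B. \<Sum>r'\<in>B. 2^N * ((\<psi> r * cnj (\<psi> r)) * (\<psi> r' * cnj (\<psi> r'))))"
      by (simp add: density_def mult_ac)
    also have "\<dots> = 2^N * ((\<Sum>r\<in>B. \<psi> r * cnj (\<psi> r)) * (\<Sum>r\<in>B. \<psi> r * cnj (\<psi> r)))"
      unfolding sum_product unfolding sum_distrib_left ..
    also have "\<dots> = 2^N" by (simp add: normsq')
    finally show ?thesis .
  qed
  have SB: "(\<Sum>\<mu>\<in>M. ws N \<mu> * tc \<mu> ^ 2) = 0"
  proof -
    have "(\<Sum>\<mu>\<in>M. ws N \<mu> * tc \<mu> ^ 2) = (\<Sum>r\<in>B. \<Sum>r'\<in>B. \<Sum>c\<in>B. \<Sum>c'\<in>B.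
      density \<psi> r c * density \<psi> r' c' * (2^N * EE N c c' * EE N r r'))"
      unfolding expand using kerB lenB unfolding M_def by (simp add: mult.assoc)
    also have "\<dots> = (\<Sum>r\<in>B. \<Sum>r'\<in>B. \<Sum>c\<in>B. \<Sum>c'\<in>B.
      (\<psi> r * \<psi> r' * EE N r r') * (2^N * (cnj (\<psi> c) * cnj (\<psi> c') * EE N c c')))"
      by (intro sum.cong refl) (simp add: density_def mult_ac)
    also have "\<dots> = (\<Sum>r\<in>B. \<Sum>r'\<in>B. \<psi> r * \<psi> r' * EE N r r') *
       (\<Sum>c\<in>B. \<Sum>c'\<in>B. 2^N * (cnj (\<psi> c) * cnj (\<psi> c') * EE N c c'))"
      unfolding sum_distrib_right unfolding sum_distrib_left ..
    also have "(\<Sum>r\<in>B. \<Sum>r'\<in>B. \<psi> r * \<psi> r' * EE N r r') = 0"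
    proof (rule Q_zero[OF finB])
      fix x y
      show "\<psi> y * \<psi> x * EE N y x = - (\<psi> x * \<psi> y * EE N x y)"
        using EE_antisym[OF assms(1), of y x] by (simp add: mult_ac)
    qed
    finally show ?thesis by simp
  qed
  define wr where "wr = (\<lambda>\<mu>::nat list. \<Prod>k<N. (if \<mu>!k = 0 then 1 else -1 :: real))"
  have ws_wr: "\<And>\<mu>. ws N \<mu> = complex_of_real (wr \<mu>)"
    unfolding ws_def wr_def of_real_prod by (intro prod.cong refl) (simp add: sg_def)
  have SAr: "(\<Sum>\<mu>\<in>M. (T \<mu>)^2) = 2^N"
  proof -
    have "complex_of_real (\<Sum>\<mu>\<in>M. (T \<mu>)^2) = complex_of_real (2^N)"
      using SA by (simp add: tcT)
    thus ?thesis by (simp only: of_real_eq_iff)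
  qed
  have SBr: "(\<Sum>\<mu>\<in>M. wr \<mu> * (T \<mu>)^2) = 0"
  proof -
    have "complex_of_real (\<Sum>\<mu>\<in>M. wr \<mu> * (T \<mu>)^2) = (\<Sum>\<mu>\<in>M. ws N \<mu> * tc \<mu> ^ 2)"
      by (simp add: tcT ws_wr)
    hence "complex_of_real (\<Sum>\<mu>\<in>M. wr \<mu> * (T \<mu>)^2) = 0" using SB by simp
    thus ?thesis by (simp only: of_real_eq_0_iff)
  qed
  have wr_le: "\<And>\<mu>. wr \<mu> \<le> 1"
  proof -
    fix \<mu>
    have "\<bar>wr \<mu>\<bar> = 1" unfolding wr_def abs_prod by (simp add: prod.neutral)
    thus "wr \<mu> \<le> 1" by simp
  qed
  have wr_F: "\<And>\<mu>. \<mu> \<in> F \<Longrightarrow> wr \<mu> = -1"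
  proof -
    fix \<mu> assume "\<mu> \<in> F"
    hence "\<And>k. k < N \<Longrightarrow> \<mu>!k \<noteq> 0" by (auto simp: F_def LL_def dest!: nth_mem)
    hence "wr \<mu> = (\<Prod>k<N. (-1::real))" unfolding wr_def by (intro prod.cong refl) simp
    thus "wr \<mu> = -1" using assms(1) by simp
  qed
  have FM: "F \<subseteq> M" by (auto simp: F_def M_def LL_def)
  have "length_of_correlations N \<psi> = (\<Sum>\<mu>\<in>F. (T \<mu>)^2)"
    by (simp add: length_of_correlations_def F_def LL_def T_def)
  also have "\<dots> = (\<Sum>\<mu>\<in>F. (1 - wr \<mu>) / 2 * (T \<mu>)^2)"
    by (intro sum.cong refl) (simp add: wr_F)
  also have "\<dots> \<le> (\<Sum>\<mu>\<in>M. (1 - wr \<mu>) / 2 * (T \<mu>)^2)"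
    by (rule sum_mono2[OF finM FM]) (simp add: wr_le)
  also have "\<dots> = ((\<Sum>\<mu>\<in>M. (T \<mu>)^2) - (\<Sum>\<mu>\<in>M. wr \<mu> * (T \<mu>)^2)) / 2"
  proof -
    have "(\<Sum>\<mu>\<in>M. (1 - wr \<mu>) / 2 * (T \<mu>)^2) = (\<Sum>\<mu>\<in>M. ((T \<mu>)^2 - wr \<mu> * (T \<mu>)^2) / 2)"
      by (intro sum.cong refl) (simp add: algebra_simps)
    thus ?thesis by (simp only: sum_divide_distrib[symmetric] sum_subtractf)
  qed
  also have "\<dots> = 2^N / 2" by (simp add: SAr SBr)
  also have "\<dots> = 2^(N-1)" using odd_pos[OF assms(1)] by (cases N) simp_all
  finally show ?thesis .
qed
end
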